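(* Let $F^*$ be the set of activated blue edges of an optimal solution of an instance of $\mathsf{StackMST}(\gamma,\Delta)$ with red tree $T$ of height $h$ rooted at its center $v_0$, and let $r(F^* )$ be its (optimal) revenue. Then $$r(F^* )\le c(T)-\sum_{i=1}^h\ \sum_{H\in\mathrm{comp}(G^*_i)}\ \min_{v\in V(H)}c_i(v_0,v).$$
   Context: $\mathsf{StackMST}(\gamma,\Delta)$: given a tree $T=(V,E(T))$ with red edge costs $c(e)\ge0$, activation costs $\gamma(e)\ge0$ for every pair $e\notin E(T)$ of vertices, and a budget $\Delta$, the leader selects a set $F$ of such pairs with $\sum_{e\in F}\gamma(e)\le\Delta$ and prices $p:F\to\mathbb{R}^+$; the follower computes a minimum spanning tree $M$ of $(V,E(T)\cup F)$ (weights $c$ on red edges, $p$ on $F$), breaking ties in favor of the leader; the leader's revenue $\sum_{e\in F\cap M}p(e)$ is to be maximized. $c(T)$ is the total red cost. Root $T$ at its center $v_0$; $h$ is its height. For $1\le i\le h$, let $V_i=\{v_1,\dots,v_{\ell_i}\}$ be the vertices at depth $i$ and $E_i$ the set of edges joining vertices of $V_i$ to their parents. $T_i$ is the star centered at $v_0$ with leaves $v_1,\dots,v_{\ell_i}$, with $c_i(v_0,v)=c(u,v)$ where $u$ is the parent of $v$ in $T$; by convention $c_i(v_0,v_0)=0$. Let $\hat T_0,\hat T_1,\dots,\hat T_{\ell_i}$ be the connected components of $T-E_i$, with $v_0\in V(\hat T_0)$ and $v_j\in V(\hat T_j)$ for $j\ge1$. Let $F^*_i$ be the set of pairs $(v_j,v_q)$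 such that there is $(u,v)\in F^*$ with $u\in V(\hat T_j)$, $v\in V(\hat T_q)$, $j\ne q$, and let $G^*_i=(\{v_0,\dots,v_{\ell_i}\},F^*_i)$; $\mathrm{comp}(G^*_i)$ denotes its set of connected components. *)

theory Defs
  imports Complex_Main
begin

definition pairs :: "'a set \<Rightarrow> 'a set set" where
  "pairs V = {{u, v} | u v. u \<in> V \<and> v \<in> V \<and> u \<noteq> v}"

definition adj :: "'a set set \<Rightarrow> ('a \<times> 'a) set" where
  "adj E = {(x, y). {x, y} \<in> E}"

definition connected_graph :: "'a set \<Rightarrow> 'a set set \<Rightarrow> bool" where
  "connected_graph V E \<longleftrightarrow> (\<forall>x\<in>V. \<forall>y\<in>V. (x, y) \<in> (adj E)\<^sup>*)"

definition is_tree :: "'a set \<Rightarrow> 'a set set \<Rightarrow> bool" where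
  "is_tree V E \<longleftrightarrow> finite V \<and> V \<noteq> {} \<and> E \<subseteq> pairs V \<and> connected_graph V E
                     \<and> card E = card V - 1"

definition comps :: "'a set \<Rightarrow> 'a set set \<Rightarrow> 'a set set" where
  "comps R E = {{y \<in> R. (x, y) \<in> (adj E)\<^sup>*} | x. x \<in> R}"

definition gdist :: "'a set set \<Rightarrow> 'a \<Rightarrow> 'a \<Rightarrow> nat" where
  "gdist E x y = (LEAST n. (x, y) \<in> (adj E) ^^ n)"

definition ecc :: "'a set \<Rightarrow> 'a set set \<Rightarrow> 'a \<Rightarrow> nat" where
  "ecc V E v = Max (gdist E v ` V)"

definition is_center :: "'a set \<Rightarrow> 'a set set \<Rightarrow> 'a \<Rightarrow> bool" where
  "is_center V E v0 \<longleftrightarrow> v0 \<in> V \<and> (\<forall>v\<in>V. ecc V E v0 \<le> ecc V E v)"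

definition is_MST :: "'a set \<Rightarrow> 'a set set \<Rightarrow> ('a set \<Rightarrow> real) \<Rightarrow> 'a set set \<Rightarrow> bool" where
  "is_MST V E w M \<longleftrightarrow> M \<subseteq> E \<and> is_tree V M \<and>
     (\<forall>M'. M' \<subseteq> E \<and> is_tree V M' \<longrightarrow> sum w M \<le> sum w M')"

definition follower_weight :: "('a set \<Rightarrow> real) \<Rightarrow> 'a set set \<Rightarrow> ('a set \<Rightarrow> real) \<Rightarrow> 'a set \<Rightarrow> real" where
  "follower_weight c F p e = (if e \<in> F then p e else c e)"

text \<open>Leader's revenue; ties among minimum spanning trees are broken in favour of the
  leader, i.e. the follower picks an MST maximising the leader's revenue.\<close>
definition revenue :: "'a set \<Rightarrow> 'a set set \<Rightarrow> ('a set \<Rightarrow> real) \<Rightarrow> 'a set set \<Rightarrow> ('a set \<Rightarrow> real) \<Rightarrow> real" where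
  "revenue V ET c F p =
     Max {sum p (F \<inter> M) | M. is_MST V (ET \<union> F) (follower_weight c F p) M}"

definition feasible :: "'a set \<Rightarrow> 'a set set \<Rightarrow> ('a set \<Rightarrow> real) \<Rightarrow> real \<Rightarrow> 'a set set \<Rightarrow> ('a set \<Rightarrow> real) \<Rightarrow> bool" where
  "feasible V ET \<gamma> \<Delta> F p \<longleftrightarrow> F \<subseteq> pairs V - ET \<and> sum \<gamma> F \<le> \<Delta> \<and> (\<forall>e\<in>F. p e \<ge> 0)"

definition optimal :: "'a set \<Rightarrow> 'a set set \<Rightarrow> ('a set \<Rightarrow> real) \<Rightarrow> ('a set \<Rightarrow> real) \<Rightarrow> real
                        \<Rightarrow> 'a set set \<Rightarrow> ('a set \<Rightarrow> real) \<Rightarrow> bool" where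
  "optimal V ET c \<gamma> \<Delta> F p \<longleftrightarrow> feasible V ET \<gamma> \<Delta> F p \<and>
     (\<forall>F' p'. feasible V ET \<gamma> \<Delta> F' p' \<longrightarrow> revenue V ET c F' p' \<le> revenue V ET c F p)"

definition depth :: "'a set set \<Rightarrow> 'a \<Rightarrow> 'a \<Rightarrow> nat" where
  "depth ET v0 v = gdist ET v0 v"

definition height :: "'a set \<Rightarrow> 'a set set \<Rightarrow> 'a \<Rightarrow> nat" where
  "height V ET v0 = ecc V ET v0"

definition layer :: "'a set \<Rightarrow> 'a set set \<Rightarrow> 'a \<Rightarrow> nat \<Rightarrow> 'a set" where
  "layer V ET v0 i = {v \<in> V. depth ET v0 v = i}"

definition parent :: "'a set set \<Rightarrow> 'a \<Rightarrow> 'a \<Rightarrow> 'a" where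
  "parent ET v0 v = (THE u. {u, v} \<in> ET \<and> depth ET v0 u + 1 = depth ET v0 v)"

definition layer_edges :: "'a set \<Rightarrow> 'a set set \<Rightarrow> 'a \<Rightarrow> nat \<Rightarrow> 'a set set" where
  "layer_edges V ET v0 i = {{parent ET v0 v, v} | v. v \<in> layer V ET v0 i}"

definition layer_cost :: "'a set set \<Rightarrow> ('a set \<Rightarrow> real) \<Rightarrow> 'a \<Rightarrow> 'a \<Rightarrow> real" where
  "layer_cost ET c v0 v = (if v = v0 then 0 else c {parent ET v0 v, v})"

definition hatT :: "'a set \<Rightarrow> 'a set set \<Rightarrow> 'a \<Rightarrow> nat \<Rightarrow> 'a \<Rightarrow> 'a set" where
  "hatT V ET v0 i x = {y \<in> V. (x, y) \<in> (adj (ET - layer_edges V ET v0 i))\<^sup>*}"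

text \<open>F^*_i: contracted blue edges between distinct components of T - E_i,
  on vertex set {v0} \<union> V_i.\<close>
definition contracted_edges :: "'a set \<Rightarrow> 'a set set \<Rightarrow> 'a \<Rightarrow> nat \<Rightarrow> 'a set set \<Rightarrow> 'a set set" where
  "contracted_edges V ET v0 i F =
     {{a, b} | a b. a \<in> insert v0 (layer V ET v0 i) \<and> b \<in> insert v0 (layer V ET v0 i) \<and> a \<noteq> b \<and>
        (\<exists>u v. {u, v} \<in> F \<and> u \<in> hatT V ET v0 i a \<and> v \<in> hatT V ET v0 i b)}"

definition Gcomps :: "'a set \<Rightarrow> 'a set set \<Rightarrow> 'a \<Rightarrow> nat \<Rightarrow> 'a set set \<Rightarrow> 'a set set" where
  "Gcomps V ET v0 i F = comps (insert v0 (layer V ET v0 i)) (contracted_edges V ET v0 i F)"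

end

theory Submission
  imports Defs
begin



lemma adj_sym: "(x,y) \<in> adj E \<Longrightarrow> (y,x) \<in> adj E"
proof -
  assume "(x,y) \<in> adj E"
  then have "{x,y} \<in> E" by (simp add: adj_def)
  moreover have "{x,y} = {y,x}" by blast
  ultimately show "(y,x) \<in> adj E" by (simp add: adj_def)
qed

lemma adj_rtrancl_sym: "(x,y) \<in> (adj E)\<^sup>* \<Longrightarrow> (y,x) \<in> (adj E)\<^sup>*"
proof (induction rule: rtrancl_induct)
  case base then show ?case by (rule rtrancl_refl)
next
  case (step y z)
  have "(z,y) \<in> adj E" using step(2) by (rule adj_sym)
  then show ?case using step(3) by (rule converse_rtrancl_into_rtrancl)
qed

lemma adj_mono: "E \<subseteq> E' \<Longrightarrow> adj E \<subseteq> adj E'"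
  by (auto simp: adj_def)

lemma adj_rtrancl_mono: "E \<subseteq> E' \<Longrightarrow> (x,y) \<in> (adj E)\<^sup>* \<Longrightarrow> (x,y) \<in> (adj E')\<^sup>*"
proof -
  assume "E \<subseteq> E'" "(x,y) \<in> (adj E)\<^sup>*"
  moreover have "(adj E)\<^sup>* \<subseteq> (adj E')\<^sup>*" by (rule rtrancl_mono[OF adj_mono[OF \<open>E \<subseteq> E'\<close>]])
  ultimately show ?thesis by blast
qed

lemma adj_insert_rtrancl:
  assumes "(x,y) \<in> (adj (insert {a,b} E))\<^sup>*"
  shows "(x,y) \<in> (adj E)\<^sup>* \<or> ((x,a) \<in> (adj E)\<^sup>* \<and> (b,y) \<in> (adj E)\<^sup>*)
         \<or> ((x,b) \<in> (adj E)\<^sup>* \<and> (a,y) \<in> (adj E)\<^sup>*)"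
  using assms
proof (induction rule: rtrancl_induct)
  case base then show ?case by simp
next
  case (step y z)
  have "{y,z} = {a,b} \<or> (y,z) \<in> adj E" using step(2) by (simp add: adj_def)
  moreover
  { assume "{y,z} = {a,b}"
    then have "(y = a \<and> z = b) \<or> (y = b \<and> z = a)" by (auto simp: doubleton_eq_iff)
    then have ?case
    proof
      assume yz: "y = a \<and> z = b"
      show ?case using step(3)
      proof (elim disjE conjE)
        assume "(x,y) \<in> (adj E)\<^sup>*" then show ?case using yz by simp
      next
        assume "(x,a) \<in> (adj E)\<^sup>*" "(b,y) \<in> (adj E)\<^sup>*" then show ?case using yz by simp
      next
        assume "(x,b) \<in> (adj E)\<^sup>*" "(a,y) \<in> (adj E)\<^sup>*" then show ?case using yz by simp
      qed
    next
      assume yz: "y = b \<and> z = a"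
      show ?case using step(3)
      proof (elim disjE conjE)
        assume "(x,y) \<in> (adj E)\<^sup>*" then show ?case using yz by simp
      next
        assume "(x,a) \<in> (adj E)\<^sup>*" "(b,y) \<in> (adj E)\<^sup>*" then show ?case using yz by simp
      next
        assume "(x,b) \<in> (adj E)\<^sup>*" "(a,y) \<in> (adj E)\<^sup>*" then show ?case using yz by simp
      qed
    qed }
  moreover
  { assume yz: "(y,z) \<in> adj E"
    have ?case using step(3)
    proof (elim disjE conjE)
      assume "(x,y) \<in> (adj E)\<^sup>*" then show ?case using yz by (meson rtrancl.rtrancl_into_rtrancl)
    next
      assume "(x,a) \<in> (adj E)\<^sup>*" "(b,y) \<in> (adj E)\<^sup>*" then show ?case using yz by (meson rtrancl.rtrancl_into_rtrancl)
    next
      assume "(x,b) \<in> (adj E)\<^sup>*" "(a,y) \<in> (adj E)\<^sup>*" then show ?case using yz by (meson rtrancl.rtrancl_into_rtrancl)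
    qed }
  ultimately show ?case by blast
qed

lemma crossing:
  assumes "(x,w) \<in> R\<^sup>*" "x \<in> U" "w \<notin> U"
  shows "\<exists>y z. (y,z) \<in> R \<and> y \<in> U \<and> z \<notin> U"
  using assms by (induction rule: rtrancl_induct) auto

lemma indep_set:
  assumes "finite E" "E \<subseteq> pairs V" "finite V"
  shows "\<exists>S \<subseteq> V. card V \<le> card S + card E \<and>
           (\<forall>x\<in>S. \<forall>y\<in>S. x \<noteq> y \<longrightarrow> (x,y) \<notin> (adj E)\<^sup>*)"
  using assms(1,2)
proof (induction E rule: finite_induct)
  case empty
  have "adj ({}::'a set set) = {}" by (simp add: adj_def)
  then have "(adj ({}::'a set set))\<^sup>* = Id" by simp
  then show ?case by (intro exI[of _ V]) auto
next
  case (insert e E)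
  then obtain S where S: "S \<subseteq> V" "card V \<le> card S + card E"
      "\<forall>x\<in>S. \<forall>y\<in>S. x \<noteq> y \<longrightarrow> (x,y) \<notin> (adj E)\<^sup>*" by auto
  obtain a b where e: "e = {a,b}" using insert(4) by (auto simp: pairs_def)
  have fS: "finite S" using S(1) assms(3) finite_subset by blast
  show ?case
  proof (cases "\<exists>s\<in>S. (s,a) \<in> (adj E)\<^sup>*")
    case True
    then obtain s where s: "s \<in> S" "(s,a) \<in> (adj E)\<^sup>*" by blast
    have "card S \<le> card (S - {s}) + 1" using fS s(1) by (simp add: card_Diff_singleton)
    moreover have "\<forall>x\<in>S - {s}. \<forall>y\<in>S - {s}. x \<noteq> y \<longrightarrow> (x,y) \<notin> (adj (insert e E))\<^sup>*"
    proof (intro ballI impI notI)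
      fix x y assume xy: "x \<in> S - {s}" "y \<in> S - {s}" "x \<noteq> y" "(x,y) \<in> (adj (insert e E))\<^sup>*"
      have sa: "(a,s) \<in> (adj E)\<^sup>*" using s(2) by (rule adj_rtrancl_sym)
      have xs: "x \<in> S" "x \<noteq> s" "y \<in> S" "y \<noteq> s" using xy by auto
      from adj_insert_rtrancl[OF xy(4)[unfolded e]]
      show False
      proof (elim disjE conjE)
        assume "(x,y) \<in> (adj E)\<^sup>*" then show False using S(3) xs xy(3) by blast
      next
        assume "(x,a) \<in> (adj E)\<^sup>*"
        then have "(x,s) \<in> (adj E)\<^sup>*" using sa by (rule rtrancl_trans)
        then show False using S(3) xs s(1) by blast
      next
        assume "(a,y) \<in> (adj E)\<^sup>*"
        then have "(y,a) \<in> (adj E)\<^sup>*" by (rule adj_rtrancl_sym)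
        then have "(y,s) \<in> (adj E)\<^sup>*" using sa by (rule rtrancl_trans)
        then show False using S(3) xs s(1) by blast
      qed
    qed
    ultimately show ?thesis using S insert(1,2)
      by (intro exI[of _ "S - {s}"]) auto
  next
    case False
    have "\<forall>x\<in>S. \<forall>y\<in>S. x \<noteq> y \<longrightarrow> (x,y) \<notin> (adj (insert e E))\<^sup>*"
    proof (intro ballI impI notI)
      fix x y assume xy: "x \<in> S" "y \<in> S" "x \<noteq> y" "(x,y) \<in> (adj (insert e E))\<^sup>*"
      from adj_insert_rtrancl[OF xy(4)[unfolded e]]
      show False
      proof (elim disjE conjE)
        assume "(x,y) \<in> (adj E)\<^sup>*" then show False using S(3) xy(1-3) by blast
      next
        assume "(x,a) \<in> (adj E)\<^sup>*" then show False using False xy(1) by blast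
      next
        assume "(a,y) \<in> (adj E)\<^sup>*"
        then have "(y,a) \<in> (adj E)\<^sup>*" by (rule adj_rtrancl_sym)
        then show False using False xy(2) by blast
      qed
    qed
    then show ?thesis using S insert(1,2)
      by (intro exI[of _ "S"]) auto
  qed
qed

lemma connected_card:
  assumes "finite V" "E \<subseteq> pairs V" "connected_graph V E"
  shows "card V \<le> card E + 1"
proof -
  have fE: "finite E"
  proof -
    have "pairs V \<subseteq> Pow V" by (auto simp: pairs_def)
    then show ?thesis using assms(1,2) by (meson finite_Pow_iff finite_subset)
  qed
  obtain S where S: "S \<subseteq> V" "card V \<le> card S + card E"
      "\<forall>x\<in>S. \<forall>y\<in>S. x \<noteq> y \<longrightarrow> (x,y) \<notin> (adj E)\<^sup>*"
    using indep_set[OF fE assms(2,1)] by blast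
  have "\<forall>a\<in>S. \<forall>b\<in>S. a = b"
  proof (intro ballI)
    fix a b assume ab: "a \<in> S" "b \<in> S"
    then have "(a,b) \<in> (adj E)\<^sup>*" using S(1) assms(3) unfolding connected_graph_def by blast
    then show "a = b" using S(3) ab by blast
  qed
  moreover have "finite S" using S(1) assms(1) finite_subset by blast
  ultimately have "card S \<le> 1" using card_le_Suc0_iff_eq by auto
  then show ?thesis using S(2) by linarith
qed

lemma tree_edge_cut:
  assumes T: "is_tree V ET" and e: "{a,b} \<in> ET" and ab: "a \<noteq> b"
  shows "(a,b) \<notin> (adj (ET - {{a,b}}))\<^sup>*"
proof
  assume ab': "(a,b) \<in> (adj (ET - {{a,b}}))\<^sup>*"
  let ?E = "ET - {{a,b}}"
  have ins: "insert {a,b} ?E = ET" using e by blast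
  have "connected_graph V ?E"
    unfolding connected_graph_def
  proof (intro ballI)
    fix x y assume "x \<in> V" "y \<in> V"
    then have "(x,y) \<in> (adj (insert {a,b} ?E))\<^sup>*" using T ins
      by (simp add: is_tree_def connected_graph_def)
    from adj_insert_rtrancl[OF this]
    show "(x,y) \<in> (adj ?E)\<^sup>*"
    proof (elim disjE conjE)
      assume "(x,a) \<in> (adj ?E)\<^sup>*" "(b,y) \<in> (adj ?E)\<^sup>*"
      then show ?thesis using ab' by (blast intro: rtrancl_trans)
    next
      assume "(x,b) \<in> (adj ?E)\<^sup>*" "(a,y) \<in> (adj ?E)\<^sup>*"
      then show ?thesis using adj_rtrancl_sym[OF ab'] by (blast intro: rtrancl_trans)
    qed
  qed
  moreover have "?E \<subseteq> pairs V" using T by (auto simp: is_tree_def)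
  moreover have "finite V" using T by (simp add: is_tree_def)
  ultimately have c1: "card V \<le> card ?E + 1" using connected_card by blast
  have "{a,b} \<in> pairs V" using T e by (auto simp: is_tree_def)
  then have "a \<in> V" "b \<in> V" by (auto simp: pairs_def doubleton_eq_iff)
  then have "card {a,b} \<le> card V" using T ab by (intro card_mono) (auto simp: is_tree_def)
  then have "2 \<le> card V" using ab by simp
  moreover have "finite ET"
  proof -
    have "pairs V \<subseteq> Pow V" by (auto simp: pairs_def)
    then show ?thesis using T by (meson finite_Pow_iff finite_subset is_tree_def)
  qed
  ultimately show False using c1 T e by (simp add: is_tree_def card_Diff_singleton)
qed




locale tctx =
  fixes V :: "'a set" and ET :: "'a set set" and v0 :: 'a
  assumes T: "is_tree V ET" and v0V: "v0 \<in> V"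
begin

abbreviation "R \<equiv> adj ET"
abbreviation "d \<equiv> depth ET v0"
definition "L k = {e \<in> ET. \<forall>x\<in>e. d x \<le> k}"
abbreviation "pa \<equiv> parent ET v0"
abbreviation "pe v \<equiv> {parent ET v0 v, v}"

lemma finV: "finite V" using T by (simp add: is_tree_def)
lemma ETp: "ET \<subseteq> pairs V" using T by (simp add: is_tree_def)
lemma edgeV: "{u,v} \<in> ET \<Longrightarrow> u \<in> V \<and> v \<in> V"
  using ETp by (auto simp: pairs_def doubleton_eq_iff)
lemma edge_ne: "{u,v} \<in> ET \<Longrightarrow> u \<noteq> v"
  using ETp by (auto simp: pairs_def doubleton_eq_iff)
lemma adjD: "(u,v) \<in> R \<Longrightarrow> {u,v} \<in> ET" by (simp add: adj_def)

lemma D0: assumes "v \<in> V" shows "(v0,v) \<in> R ^^ d v"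
proof -
  have "(v0,v) \<in> R\<^sup>*" using T assms v0V by (simp add: is_tree_def connected_graph_def)
  then obtain n where "(v0,v) \<in> R ^^ n" using rtrancl_power by blast
  then show ?thesis unfolding depth_def gdist_def by (rule LeastI)
qed

lemma Dle: "(v0,v) \<in> R ^^ n \<Longrightarrow> d v \<le> n"
  unfolding depth_def gdist_def by (rule Least_le)

lemma D1: "d v0 = 0"
  using Dle[of v0 0] by simp

lemma D2: assumes "{u,v} \<in> ET" shows "d v \<le> d u + 1"
proof -
  have "u \<in> V" using edgeV assms by blast
  then have "(v0,u) \<in> R ^^ d u" by (rule D0)
  moreover have "(u,v) \<in> R" using assms by (simp add: adj_def)
  ultimately have "(v0,v) \<in> R ^^ Suc (d u)" by (rule relpow_Suc_I)
  then have "d v \<le> Suc (d u)" by (rule Dle)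
  then show ?thesis by simp
qed

lemma D3: assumes "v \<in> V" "d v = Suc k" shows "\<exists>u. {u,v} \<in> ET \<and> d u = k"
proof -
  have "(v0,v) \<in> R ^^ Suc k" using D0[OF assms(1)] assms(2) by simp
  then obtain y where y: "(v0,y) \<in> R ^^ k" "(y,v) \<in> R" by (rule relpow_Suc_E)
  have e: "{y,v} \<in> ET" using y(2) by (simp add: adj_def)
  have "d y \<le> k" using Dle y(1) .
  moreover have "d v \<le> d y + 1" using D2 e .
  ultimately show ?thesis using e assms(2) by (intro exI[of _ y]) simp
qed

lemma L_sub: "L k \<subseteq> ET" by (auto simp: L_def)
lemma L_mono: "k \<le> k' \<Longrightarrow> L k \<subseteq> L k'" by (auto simp: L_def)

lemma D4: assumes "u \<in> V" shows "(v0,u) \<in> (adj (L (d u)))\<^sup>*"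
proof -
  have "\<forall>u\<in>V. d u = k \<longrightarrow> (v0,u) \<in> (adj (L k))\<^sup>*" for k
  proof (induction k)
    case 0
    show ?case
    proof (intro ballI impI)
      fix u assume "u \<in> V" "d u = 0"
      then have "(v0,u) \<in> R ^^ 0" using D0[of u] by simp
      then show "(v0,u) \<in> (adj (L 0))\<^sup>*" by simp
    qed
  next
    case (Suc k)
    show ?case
    proof (intro ballI impI)
      fix u assume u: "u \<in> V" "d u = Suc k"
      obtain w where w: "{w,u} \<in> ET" "d w = k" using D3[OF u] by blast
      have "w \<in> V" using edgeV w(1) by blast
      then have "(v0,w) \<in> (adj (L k))\<^sup>*" using Suc w(2) by blast
      then have "(v0,w) \<in> (adj (L (Suc k)))\<^sup>*"
        by (rule adj_rtrancl_mono[rotated]) (rule L_mono, simp)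
      moreover have "(w,u) \<in> adj (L (Suc k))" using w u by (auto simp: L_def adj_def)
      ultimately show "(v0,u) \<in> (adj (L (Suc k)))\<^sup>*" by (rule rtrancl_into_rtrancl)
    qed
  qed
  then show ?thesis using assms by blast
qed

lemma D4': assumes "u \<in> V" "d u \<le> k" "L k \<subseteq> E" shows "(v0,u) \<in> (adj E)\<^sup>*"
proof -
  have "L (d u) \<subseteq> E" using L_mono[OF assms(2)] assms(3) by blast
  then show ?thesis by (rule adj_rtrancl_mono[OF _ D4[OF assms(1)]])
qed

lemma parent_unique:
  assumes "{u,v} \<in> ET" "{u',v} \<in> ET" "d u + 1 = d v" "d u' + 1 = d v"
  shows "u = u'"
proof (rule ccontr)
  assume ne: "u \<noteq> u'"
  let ?E = "ET - {{u,v}}"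
  have uv: "u \<noteq> v" using edge_ne assms(1) by blast
  have LE: "L (d u) \<subseteq> ?E" using assms(3) by (auto simp: L_def)
  have uV: "u \<in> V" using edgeV assms(1) by blast
  have u'V: "u' \<in> V" using edgeV assms(2) by blast
  have 1: "(v0,u) \<in> (adj ?E)\<^sup>*" using D4'[OF uV order_refl LE] .
  have "d u' = d u" using assms(3,4) by simp
  then have 2: "(v0,u') \<in> (adj ?E)\<^sup>*" using D4'[OF u'V _ LE] by simp
  have 3: "(u',v) \<in> adj ?E" using assms(2) ne uv by (auto simp: adj_def doubleton_eq_iff)
  have "(u,v0) \<in> (adj ?E)\<^sup>*" using 1 by (rule adj_rtrancl_sym)
  also have "(v0,u') \<in> (adj ?E)\<^sup>*" by (rule 2)
  also have "(u',v) \<in> (adj ?E)\<^sup>*" using 3 by (rule r_into_rtrancl)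
  finally have "(u,v) \<in> (adj ?E)\<^sup>*" .
  then show False using tree_edge_cut[OF T assms(1) uv] by blast
qed

lemma P1: assumes "v \<in> V" "d v \<ge> 1"
  shows "{pa v, v} \<in> ET" "d (pa v) + 1 = d v"
proof -
  obtain k where k: "d v = Suc k" using assms(2) by (cases "d v") auto
  obtain u where u: "{u,v} \<in> ET" "d u = k" using D3[OF assms(1) k] by blast
  have u2: "{u,v} \<in> ET \<and> d u + 1 = d v" using u k by simp
  have "pa v = u" unfolding parent_def
  proof (rule the_equality)
    show "{u,v} \<in> ET \<and> d u + 1 = d v" by (rule u2)
  next
    fix x assume "{x,v} \<in> ET \<and> d x + 1 = d v"
    then show "x = u" using parent_unique[of x v u] u2 by blast
  qed
  then show "{pa v, v} \<in> ET" "d (pa v) + 1 = d v" using u k by auto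
qed

end



context tctx begin

abbreviation "Vi i \<equiv> layer V ET v0 i"
abbreviation "Ei i \<equiv> layer_edges V ET v0 i"
abbreviation "hat i \<equiv> hatT V ET v0 i"

lemma Vi_iff: "v \<in> Vi i \<longleftrightarrow> v \<in> V \<and> d v = i" by (simp add: layer_def)

lemma E1: assumes "v \<in> Vi i" "1 \<le> i"
  shows "pe v \<in> ET" "d (pa v) + 1 = i" "pa v \<in> V" "pa v \<noteq> v" "v \<noteq> v0" "v \<in> V" "d v = i"
proof -
  show "pe v \<in> ET" "d (pa v) + 1 = i" using P1[of v] assms by (auto simp: Vi_iff)
  then show "pa v \<in> V" "pa v \<noteq> v" using edgeV edge_ne by blast+
  show "v \<noteq> v0" "v \<in> V" "d v = i" using assms D1 by (auto simp: Vi_iff)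
qed

lemma E3: "e \<in> Ei i \<Longrightarrow> \<exists>v\<in>Vi i. e = pe v" by (auto simp: layer_edges_def)
lemma E3': "v \<in> Vi i \<Longrightarrow> pe v \<in> Ei i" by (auto simp: layer_edges_def)

lemma E2: "1 \<le> i \<Longrightarrow> Ei i \<subseteq> ET" using E1 E3 by blast

lemma E4: assumes "k < i" "1 \<le> i" shows "L k \<subseteq> ET - Ei i"
proof
  fix e assume e: "e \<in> L k"
  have "e \<notin> Ei i"
  proof
    assume "e \<in> Ei i"
    then obtain v where "v \<in> Vi i" "e = pe v" using E3 by blast
    then show False using e assms by (auto simp: L_def Vi_iff)
  qed
  then show "e \<in> ET - Ei i" using e L_sub by blast
qed

lemma E5: assumes "1 \<le> i" shows "inj_on (\<lambda>v. pe v) (Vi i)"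
proof (rule inj_onI)
  fix v w assume vw: "v \<in> Vi i" "w \<in> Vi i" "pe v = pe w"
  show "v = w"
  proof (rule ccontr)
    assume "v \<noteq> w"
    then have "v = pa w" using vw(3) by (auto simp: doubleton_eq_iff)
    then show False using E1[OF vw(1) assms] E1[OF vw(2) assms] by simp
  qed
qed

lemma E6: assumes "1 \<le> i" "1 \<le> j" "e \<in> Ei i" "e \<in> Ei j" shows "i = j"
proof -
  obtain v where v: "v \<in> Vi i" "e = pe v" using E3 assms(3) by blast
  obtain w where w: "w \<in> Vi j" "e = pe w" using E3 assms(4) by blast
  have "(pa v = pa w \<and> v = w) \<or> (pa v = w \<and> v = pa w)" using v w by (auto simp: doubleton_eq_iff)
  then show ?thesis using E1[OF v(1) assms(1)] E1[OF w(1) assms(2)] by auto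
qed

lemma H1: assumes "a \<in> Vi i" "1 \<le> i" shows "(pa a, a) \<notin> (adj (ET - {pe a}))\<^sup>*"
  using tree_edge_cut[OF T E1(1,4)[OF assms]] .

lemma low_pa: assumes "a \<in> Vi i" "1 \<le> i"
  shows "(v0, pa a) \<in> (adj (ET - Ei i))\<^sup>*"
proof -
  have "d (pa a) \<le> i - 1" using E1(2)[OF assms] by simp
  moreover have "L (i - 1) \<subseteq> ET - Ei i" using E4[of "i - 1" i] assms(2) by simp
  ultimately show ?thesis using D4'[OF E1(3)[OF assms]] by blast
qed

lemma sub_pe: "a \<in> Vi i \<Longrightarrow> ET - Ei i \<subseteq> ET - {pe a}"
  using E3' by blast

lemma H2: assumes "a \<in> Vi i" "1 \<le> i" shows "(v0,a) \<notin> (adj (ET - Ei i))\<^sup>*"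
proof
  assume h: "(v0,a) \<in> (adj (ET - Ei i))\<^sup>*"
  have "(pa a, v0) \<in> (adj (ET - Ei i))\<^sup>*" using low_pa[OF assms] by (rule adj_rtrancl_sym)
  then have "(pa a, a) \<in> (adj (ET - Ei i))\<^sup>*" using h by (rule rtrancl_trans)
  then have "(pa a, a) \<in> (adj (ET - {pe a}))\<^sup>*" by (rule adj_rtrancl_mono[OF sub_pe[OF assms(1)]])
  then show False using H1[OF assms] by blast
qed

lemma H3: assumes "a \<in> Vi i" "v \<in> Vi i" "a \<noteq> v" "1 \<le> i"
  shows "(a,v) \<notin> (adj (ET - Ei i))\<^sup>*"
proof
  let ?E = "ET - {pe v}"
  have sub: "ET - Ei i \<subseteq> ?E" by (rule sub_pe[OF assms(2)])
  assume "(a,v) \<in> (adj (ET - Ei i))\<^sup>*"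
  then have "(a,v) \<in> (adj ?E)\<^sup>*" by (rule adj_rtrancl_mono[OF sub])
  then have 1: "(v,a) \<in> (adj ?E)\<^sup>*" by (rule adj_rtrancl_sym)
  have "pe a \<noteq> pe v" using E5[OF assms(4)] assms(1-3) by (meson inj_on_contraD)
  then have "{a, pa a} \<in> ?E" using E1(1)[OF assms(1,4)] by (auto simp: insert_commute[of a "pa a"])
  then have 2: "(a, pa a) \<in> adj ?E" by (simp add: adj_def)
  have "(v0, pa a) \<in> (adj ?E)\<^sup>*" by (rule adj_rtrancl_mono[OF sub low_pa[OF assms(1,4)]])
  then have 3: "(pa a, v0) \<in> (adj ?E)\<^sup>*" by (rule adj_rtrancl_sym)
  have 4: "(v0, pa v) \<in> (adj ?E)\<^sup>*" by (rule adj_rtrancl_mono[OF sub low_pa[OF assms(2,4)]])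
  have "(v, pa a) \<in> (adj ?E)\<^sup>*" using 1 2 by (rule rtrancl_into_rtrancl)
  also note 3
  also note 4
  finally have "(pa v, v) \<in> (adj ?E)\<^sup>*" by (rule adj_rtrancl_sym)
  then show False using H1[OF assms(2,4)] by blast
qed

lemma H4: assumes "w \<in> V" "1 \<le> i" shows "\<exists>b \<in> insert v0 (Vi i). w \<in> hat i b"
proof (cases "d w < i")
  case True
  have "(v0,w) \<in> (adj (ET - Ei i))\<^sup>*" using D4'[OF assms(1) order_refl E4[OF True assms(2)]] .
  then show ?thesis using assms(1) by (auto simp: hatT_def)
next
  case False
  have "\<forall>w\<in>V. d w = i + k \<longrightarrow> (\<exists>b\<in>Vi i. (b,w) \<in> (adj (ET - Ei i))\<^sup>*)" for k
  proof (induction k)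
    case 0 then show ?case by (auto simp: Vi_iff)
  next
    case (Suc k)
    show ?case
    proof (intro ballI impI)
      fix w assume w: "w \<in> V" "d w = i + Suc k"
      obtain u where u: "{u,w} \<in> ET" "d u = i + k" using D3[OF w(1)] w(2) by auto
      have "u \<in> V" using edgeV u(1) by blast
      then obtain b where b: "b \<in> Vi i" "(b,u) \<in> (adj (ET - Ei i))\<^sup>*" using Suc u(2) by blast
      have "{u,w} \<notin> Ei i"
      proof
        assume "{u,w} \<in> Ei i"
        then obtain v where v: "v \<in> Vi i" "{u,w} = pe v" using E3 by blast
        then have "w = v \<or> w = pa v" by (auto simp: doubleton_eq_iff)
        then show False using E1[OF v(1) assms(2)] w(2) by auto
      qed
      then have "(u,w) \<in> adj (ET - Ei i)" using u(1) by (simp add: adj_def)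
      then have "(b,w) \<in> (adj (ET - Ei i))\<^sup>*" using b(2) by (rule rtrancl_into_rtrancl[rotated])
      then show "\<exists>b\<in>Vi i. (b,w) \<in> (adj (ET - Ei i))\<^sup>*" using b(1) by blast
    qed
  qed
  moreover have "d w = i + (d w - i)" using False by simp
  ultimately obtain b where "b \<in> Vi i" "(b,w) \<in> (adj (ET - Ei i))\<^sup>*"
    using assms(1) by blast
  then show ?thesis using assms(1) by (auto simp: hatT_def)
qed

end



context tctx begin

lemma comp_elem: assumes "H \<in> Gcomps V ET v0 i F"
  obtains x where "x \<in> insert v0 (Vi i)"
    "H = {y \<in> insert v0 (Vi i). (x,y) \<in> (adj (contracted_edges V ET v0 i F))\<^sup>*}"
  using assms unfolding Gcomps_def comps_def by blast

lemma comp_disj: assumes "H1 \<in> Gcomps V ET v0 i F" "H2 \<in> Gcomps V ET v0 i F" "z \<in> H1" "z \<in> H2"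
  shows "H1 = H2"
proof -
  let ?R = "adj (contracted_edges V ET v0 i F)"
  obtain x1 where x1: "H1 = {y \<in> insert v0 (Vi i). (x1,y) \<in> ?R\<^sup>*}" using comp_elem[OF assms(1)] by blast
  obtain x2 where x2: "H2 = {y \<in> insert v0 (Vi i). (x2,y) \<in> ?R\<^sup>*}" using comp_elem[OF assms(2)] by blast
  have a: "(x1,z) \<in> ?R\<^sup>*" "(x2,z) \<in> ?R\<^sup>*" using assms(3,4) x1 x2 by auto
  have "(x1,y) \<in> ?R\<^sup>* \<longleftrightarrow> (x2,y) \<in> ?R\<^sup>*" for y
  proof
    assume "(x1,y) \<in> ?R\<^sup>*"
    have "(x2,z) \<in> ?R\<^sup>*" by (rule a(2))
    also have "(z,x1) \<in> ?R\<^sup>*" using a(1) by (rule adj_rtrancl_sym)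
    also note \<open>(x1,y) \<in> ?R\<^sup>*\<close>
    finally show "(x2,y) \<in> ?R\<^sup>*" .
  next
    assume "(x2,y) \<in> ?R\<^sup>*"
    have "(x1,z) \<in> ?R\<^sup>*" by (rule a(1))
    also have "(z,x2) \<in> ?R\<^sup>*" using a(2) by (rule adj_rtrancl_sym)
    also note \<open>(x2,y) \<in> ?R\<^sup>*\<close>
    finally show "(x1,y) \<in> ?R\<^sup>*" .
  qed
  then show ?thesis using x1 x2 by auto
qed

lemma layer_claim:
  assumes i: "1 \<le> i" and MF: "M \<subseteq> ET \<union> F" and FV: "F \<subseteq> pairs V"
    and Mc: "connected_graph V M"
    and H: "H \<in> Gcomps V ET v0 i F" and v0H: "v0 \<notin> H"
  shows "\<exists>v\<in>H. v \<in> Vi i \<and> pe v \<in> M"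
proof -
  let ?A = "insert v0 (Vi i)"
  let ?CE = "contracted_edges V ET v0 i F"
  let ?R = "adj ?CE"
  obtain x where x: "x \<in> ?A" "H = {y \<in> ?A. (x,y) \<in> ?R\<^sup>*}" using comp_elem[OF H] by blast
  have HA: "H \<subseteq> ?A" using x by auto
  have xH: "x \<in> H" using x by auto
  have HVi: "H \<subseteq> Vi i" using HA v0H by auto
  define U where "U = (\<Union>a\<in>H. hat i a)"
  have xV: "x \<in> V" using xH HVi by (auto simp: Vi_iff)
  have "x \<in> hat i x" using xV by (auto simp: hatT_def)
  then have xU: "x \<in> U" using xH U_def by blast
  have v0U: "v0 \<notin> U"
  proof
    assume "v0 \<in> U"
    then obtain a where a: "a \<in> H" "v0 \<in> hat i a" using U_def by blast
    then have "(a,v0) \<in> (adj (ET - Ei i))\<^sup>*" by (simp add: hatT_def)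
    then have "(v0,a) \<in> (adj (ET - Ei i))\<^sup>*" by (rule adj_rtrancl_sym)
    moreover have "a \<in> Vi i" using a(1) HVi by blast
    ultimately show False using H2[OF _ i] by blast
  qed
  have "(x,v0) \<in> (adj M)\<^sup>*" using Mc xV v0V by (simp add: connected_graph_def)
  from crossing[OF this xU v0U]
  obtain y z where yz: "(y,z) \<in> adj M" "y \<in> U" "z \<notin> U" by blast
  have yzM: "{y,z} \<in> M" using yz(1) by (simp add: adj_def)
  obtain a where a: "a \<in> H" "y \<in> hat i a" using yz(2) U_def by blast
  have aVi: "a \<in> Vi i" using a(1) HVi by blast
  have ay: "(a,y) \<in> (adj (ET - Ei i))\<^sup>*" using a(2) by (simp add: hatT_def)
  have case3: "{y,z} \<notin> ET - Ei i"
  proof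
    assume e: "{y,z} \<in> ET - Ei i"
    then have "z \<in> V" using edgeV by blast
    moreover have "(a,z) \<in> (adj (ET - Ei i))\<^sup>*"
    proof -
      have "(y,z) \<in> adj (ET - Ei i)" using e by (simp add: adj_def)
      with ay show ?thesis by (rule rtrancl_into_rtrancl)
    qed
    ultimately have "z \<in> hat i a" by (simp add: hatT_def)
    then show False using yz(3) a(1) U_def by blast
  qed
  have case1: "{y,z} \<notin> F"
  proof
    assume e: "{y,z} \<in> F"
    then have "z \<in> V" using FV by (auto simp: pairs_def doubleton_eq_iff)
    then obtain b where b: "b \<in> ?A" "z \<in> hat i b" using H4 i by blast
    have bH: "b \<notin> H" using b(2) yz(3) U_def by blast
    then have ab: "a \<noteq> b" using a(1) by blast
    have aA: "a \<in> ?A" using HA a(1) by blast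
    have "\<exists>u w. {u,w} \<in> F \<and> u \<in> hat i a \<and> w \<in> hat i b" using e a(2) b(2) by blast
    then have "{a,b} \<in> ?CE" unfolding contracted_edges_def
      using aA b(1) ab by blast
    then have "(a,b) \<in> ?R" by (simp add: adj_def)
    moreover have "(x,a) \<in> ?R\<^sup>*" using a(1) x(2) by simp
    ultimately have "(x,b) \<in> ?R\<^sup>*" by (rule rtrancl_into_rtrancl[rotated])
    then have "b \<in> H" using x(2) b(1) by simp
    then show False using bH by blast
  qed
  have "{y,z} \<in> Ei i" using yzM MF case1 case3 by blast
  then obtain v where v: "v \<in> Vi i" "{y,z} = pe v" using E3 by blast
  then have "(y = pa v \<and> z = v) \<or> (y = v \<and> z = pa v)" by (auto simp: doubleton_eq_iff)
  then show ?thesis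
  proof
    assume yv: "y = pa v \<and> z = v"
    have "(v0, y) \<in> (adj (ET - Ei i))\<^sup>*" using low_pa[OF v(1) i] yv by simp
    also have "(y,a) \<in> (adj (ET - Ei i))\<^sup>*" using ay by (rule adj_rtrancl_sym)
    finally show ?thesis using H2[OF aVi i] by blast
  next
    assume yv: "y = v \<and> z = pa v"
    have "a = v"
    proof (rule ccontr)
      assume "a \<noteq> v"
      then show False using H3[OF aVi v(1) _ i] ay yv by simp
    qed
    then have "v \<in> H" using a(1) by simp
    moreover have "pe v \<in> M" using v(2) yzM by simp
    ultimately show ?thesis using v(1) by blast
  qed
qed

end



context tctx begin

lemma finET: "finite ET"
proof -
  have "pairs V \<subseteq> Pow V" by (auto simp: pairs_def)
  then show ?thesis using ETp finV by (meson finite_Pow_iff finite_subset)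
qed

lemma layer_sum:
  assumes i: "1 \<le> i" and MF: "M \<subseteq> ET \<union> F" and FV: "F \<subseteq> pairs V"
    and Mc: "connected_graph V M" and cnn: "\<forall>e\<in>ET. c e \<ge> 0"
  shows "(\<Sum>H \<in> Gcomps V ET v0 i F. Min (layer_cost ET c v0 ` H)) \<le> sum c (M \<inter> Ei i)"
proof -
  let ?A = "insert v0 (Vi i)"
  let ?Hs = "Gcomps V ET v0 i F"
  let ?lc = "layer_cost ET c v0"
  define Hs' where "Hs' = {H \<in> ?Hs. v0 \<notin> H}"
  define g where "g H = (SOME v. v \<in> H \<and> v \<in> Vi i \<and> pe v \<in> M)" for H
  define S where "S = {v \<in> Vi i. pe v \<in> M}"
  have g: "g H \<in> H \<and> g H \<in> Vi i \<and> pe (g H) \<in> M" if "H \<in> Hs'" for H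
  proof -
    have "\<exists>v. v \<in> H \<and> v \<in> Vi i \<and> pe v \<in> M"
      using layer_claim[OF i MF FV Mc] that Hs'_def by blast
    then show ?thesis unfolding g_def by (rule someI_ex)
  qed
  have finA: "finite ?A" using finV by (simp add: layer_def)
  have "?Hs = (\<lambda>x. {y \<in> ?A. (x,y) \<in> (adj (contracted_edges V ET v0 i F))\<^sup>*}) ` ?A"
    by (auto simp: Gcomps_def comps_def)
  then have finHs: "finite ?Hs" using finA by simp
  have finH: "finite H" "H \<subseteq> ?A" if HH: "H \<in> ?Hs" for H
  proof -
    obtain x where "x \<in> ?A" "H = {y \<in> ?A. (x,y) \<in> (adj (contracted_edges V ET v0 i F))\<^sup>*}"
      using comp_elem[OF HH] by blast
    then show "H \<subseteq> ?A" by blast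
    then show "finite H" using finA finite_subset by blast
  qed
  have lc_S: "?lc v = c (pe v) \<and> c (pe v) \<ge> 0" if "v \<in> Vi i" for v
    using E1[OF that i] cnn by (simp add: layer_cost_def)
  have "(\<Sum>H \<in> ?Hs. Min (?lc ` H)) \<le> (\<Sum>H \<in> ?Hs. if v0 \<notin> H then ?lc (g H) else 0)"
  proof (rule sum_mono)
    fix H assume H: "H \<in> ?Hs"
    show "Min (?lc ` H) \<le> (if v0 \<notin> H then ?lc (g H) else 0)"
    proof (cases "v0 \<in> H")
      case True
      then have "Min (?lc ` H) \<le> ?lc v0" using finH(1)[OF H] by simp
      then show ?thesis using True by (simp add: layer_cost_def)
    next
      case False
      then have "H \<in> Hs'" using H Hs'_def by blast
      then have "g H \<in> H" using g by blast
      then have "Min (?lc ` H) \<le> ?lc (g H)" using finH(1)[OF H] by simp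
      then show ?thesis using False by simp
    qed
  qed
  also have "\<dots> = (\<Sum>H \<in> Hs'. ?lc (g H))"
    unfolding Hs'_def using finHs by (simp add: sum.inter_filter)
  also have "\<dots> = (\<Sum>v \<in> g ` Hs'. ?lc v)"
  proof -
    have "inj_on g Hs'"
    proof (rule inj_onI)
      fix H1 H2 assume h: "H1 \<in> Hs'" "H2 \<in> Hs'" "g H1 = g H2"
      show "H1 = H2"
        using comp_disj[of H1 i F H2 "g H1"] g[OF h(1)] g[OF h(2)] h Hs'_def by auto
    qed
    then show ?thesis by (simp add: sum.reindex)
  qed
  also have "\<dots> \<le> (\<Sum>v \<in> S. ?lc v)"
  proof (rule sum_mono2)
    show "finite S" using finV by (simp add: S_def layer_def)
    show "g ` Hs' \<subseteq> S" using g S_def by blast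
    fix v assume "v \<in> S - g ` Hs'"
    then show "0 \<le> ?lc v" using lc_S S_def by auto
  qed
  also have "\<dots> = (\<Sum>v \<in> S. c (pe v))"
    using lc_S S_def by (intro sum.cong) auto
  also have "\<dots> = sum c ((\<lambda>v. pe v) ` S)"
  proof -
    have "S \<subseteq> Vi i" using S_def by blast
    with E5[OF i] have "inj_on (\<lambda>v. pe v) S" by (rule inj_on_subset)
    then show ?thesis by (simp add: sum.reindex o_def)
  qed
  also have "(\<lambda>v. pe v) ` S = M \<inter> Ei i"
    unfolding S_def layer_edges_def by auto
  finally show ?thesis .
qed

lemma total_sum:
  assumes MF: "M \<subseteq> ET \<union> F" and FV: "F \<subseteq> pairs V"
    and Mc: "connected_graph V M" and cnn: "\<forall>e\<in>ET. c e \<ge> 0"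
  shows "(\<Sum>i = 1..h. \<Sum>H \<in> Gcomps V ET v0 i F. Min (layer_cost ET c v0 ` H)) \<le> sum c (M \<inter> ET)"
proof -
  have "(\<Sum>i = 1..h. \<Sum>H \<in> Gcomps V ET v0 i F. Min (layer_cost ET c v0 ` H))
        \<le> (\<Sum>i = 1..h. sum c (M \<inter> Ei i))"
    by (rule sum_mono) (rule layer_sum[OF _ MF FV Mc cnn], simp)
  also have "\<dots> = sum c (\<Union>i\<in>{1..h}. M \<inter> Ei i)"
  proof (rule sum.UNION_disjoint[symmetric])
    show "finite {1..h}" by simp
    show "\<forall>i\<in>{1..h}. finite (M \<inter> Ei i)"
      using E2 finET finite_subset by (metis atLeastAtMost_iff inf.coboundedI2)
    show "\<forall>i\<in>{1..h}. \<forall>j\<in>{1..h}. i \<noteq> j \<longrightarrow> M \<inter> Ei i \<inter> (M \<inter> Ei j) = {}"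
      using E6 by fastforce
  qed
  also have "\<dots> \<le> sum c (M \<inter> ET)"
  proof (rule sum_mono2)
    show "finite (M \<inter> ET)" using finET by simp
    have "Ei i \<subseteq> ET" if "i \<in> {1..h}" for i using E2 that by simp
    then show "(\<Union>i\<in>{1..h}. M \<inter> Ei i) \<subseteq> M \<inter> ET" by blast
    fix e assume "e \<in> M \<inter> ET - (\<Union>i\<in>{1..h}. M \<inter> Ei i)"
    then show "0 \<le> c e" using cnn by blast
  qed
  finally show ?thesis .
qed

end



theorem lemma6:
  fixes V :: "'a set" and ET :: "'a set set"
    and c \<gamma> :: "'a set \<Rightarrow> real" and \<Delta> :: real
    and Fs :: "'a set set" and ps :: "'a set \<Rightarrow> real" and v0 :: 'a
  assumes tree: "is_tree V ET"
    and c_nonneg: "\<forall>e\<in>ET. c e \<ge> 0"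
    and \<gamma>_nonneg: "\<forall>e\<in>pairs V - ET. \<gamma> e \<ge> 0"
    and center: "is_center V ET v0"
    and opt: "optimal V ET c \<gamma> \<Delta> Fs ps"
  shows "revenue V ET c Fs ps \<le> sum c ET -
           (\<Sum>i = 1..height V ET v0. \<Sum>H \<in> Gcomps V ET v0 i Fs. Min (layer_cost ET c v0 ` H))"
proof -
  interpret tctx V ET v0
    using tree center by unfold_locales (auto simp: is_center_def)
  have Fs: "Fs \<subseteq> pairs V - ET" using opt by (simp add: optimal_def feasible_def)
  have FsV: "Fs \<subseteq> pairs V" using Fs by blast
  have finP: "finite (pairs V)"
  proof -
    have "pairs V \<subseteq> Pow V" by (auto simp: pairs_def)
    then show ?thesis using finV by (meson finite_Pow_iff finite_subset)
  qed
  have finE: "finite (ET \<union> Fs)" using finET FsV finP finite_subset by blast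
  let ?w = "follower_weight c Fs ps"
  define S where "S = {M. M \<subseteq> ET \<union> Fs \<and> is_tree V M}"
  have finS: "finite S" using finE unfolding S_def by (simp add: finite_subset[of _ "Pow (ET \<union> Fs)"] subset_iff)
  have ETS: "ET \<in> S" using tree S_def by blast
  define m where "m = Min (sum ?w ` S)"
  have "m \<in> sum ?w ` S" unfolding m_def using finS ETS by (intro Min_in) auto
  then obtain M0 where M0: "M0 \<in> S" "sum ?w M0 = m" by blast
  have "is_MST V (ET \<union> Fs) ?w M0"
    unfolding is_MST_def
  proof (intro conjI allI impI)
    show "M0 \<subseteq> ET \<union> Fs" "is_tree V M0" using M0 S_def by auto
    fix M' assume "M' \<subseteq> ET \<union> Fs \<and> is_tree V M'"
    then have "M' \<in> S" using S_def by blast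
    then show "sum ?w M0 \<le> sum ?w M'" using M0(2) finS unfolding m_def by simp
  qed
  define RS where "RS = {sum ps (Fs \<inter> M) | M. is_MST V (ET \<union> Fs) ?w M}"
  have "RS \<subseteq> (\<lambda>M. sum ps (Fs \<inter> M)) ` Pow (ET \<union> Fs)"
    unfolding RS_def is_MST_def by blast
  then have finRS: "finite RS" using finE by (meson finite_Pow_iff finite_imageI finite_subset)
  have "RS \<noteq> {}" using \<open>is_MST V (ET \<union> Fs) ?w M0\<close> RS_def by blast
  then have "Max RS \<in> RS" using finRS by (rule Max_in[rotated])
  then obtain M where M: "is_MST V (ET \<union> Fs) ?w M" "revenue V ET c Fs ps = sum ps (Fs \<inter> M)"
    unfolding RS_def revenue_def by blast
  have MF: "M \<subseteq> ET \<union> Fs" and Mt: "is_tree V M" using M(1) by (auto simp: is_MST_def)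
  have Mc: "connected_graph V M" using Mt by (simp add: is_tree_def)
  have finM: "finite M" using MF finE finite_subset by blast
  have "sum ?w M \<le> sum ?w ET" using M(1) tree by (simp add: is_MST_def)
  also have "sum ?w ET = sum c ET"
    using Fs by (intro sum.cong) (auto simp: follower_weight_def)
  finally have 1: "sum ?w M \<le> sum c ET" .
  have "sum ?w M = sum ?w (M \<inter> Fs) + sum ?w (M - Fs)" using finM by (rule sum.Int_Diff)
  also have "sum ?w (M \<inter> Fs) = sum ps (Fs \<inter> M)"
    by (subst Int_commute) (rule sum.cong, auto simp: follower_weight_def)
  also have "sum ?w (M - Fs) = sum c (M \<inter> ET)"
  proof -
    have "M - Fs = M \<inter> ET" using MF Fs by blast
    moreover have "sum ?w (M \<inter> ET) = sum c (M \<inter> ET)"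
      using Fs by (intro sum.cong) (auto simp: follower_weight_def)
    ultimately show ?thesis by simp
  qed
  finally have 2: "sum ?w M = sum ps (Fs \<inter> M) + sum c (M \<inter> ET)" .
  have 3: "(\<Sum>i = 1..height V ET v0. \<Sum>H \<in> Gcomps V ET v0 i Fs. Min (layer_cost ET c v0 ` H))
           \<le> sum c (M \<inter> ET)"
    by (rule total_sum[OF MF FsV Mc c_nonneg])
  show ?thesis using 1 2 3 M(2) by linarith
qed


end
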